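(* Let $X$ be a Banach space, $\mathcal F$ a filter of subsets of $\mathbb N$ with $\chi(\mathcal F)<\mathfrak p$, and $(e_n)_{n=1}^\infty$ an $\mathcal F$-basis of $X$ with partial sum maps $S_n$. Then there exists $A\in\mathcal F$ such that $\sup_{\nu\in A}\|S_\nu(x)\|<\infty$ for every $x\in X$ (i.e. $X_A=X$).
   Context: A filter $\mathcal F$ of subsets of $\mathbb N$ is a nonempty family not containing $\emptyset$, closed under finite intersections and supersets. A sequence $(e_n)$ in a Banach space $X$ is an $\mathcal F$-basis if for each $x\in X$ there is a unique scalar sequence $(a_n)$ with $x=\mathcal F\text{-}\lim_n\sum_{k=1}^n a_ke_k$ in norm (for every $\varepsilon>0$ there is $A\in\mathcal F$ with $\|x-\sum_{k\le n}a_ke_k\|<\varepsilon$ for $n\in A$); $e_n^\ast(x)=a_n$ and $S_n(x)=\sum_{k=1}^n e_k^\ast(x)e_k$. For $A\in\mathcal F$, $X_A=\{x\in X:\sup_{\nu\in A}\|S_\nu(x)\|<\infty\}$. The character $\chi(\mathcal F)$ is the least cardinality of a family $\mathcal B\subset\mathcal F$ such that every $A\in\mathcal F$ contains some $B\in\mathcal B$. The pseudointersection number $\mathfrak p$ is the least cardinal $\kappa$ for which there exists a family $\mathscr A$ of subsets of $\mathbb N$ with $|\mathscr A|=\kappa$, all finite intersections of members of $\mathscr A$ infinite, but no infinite $B\subset\mathbb N$ with $B\setminus A$ finite for all $A\in\mathscr A$. *)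

theory Defs
  imports "HOL-Analysis.Analysis"
begin

text \<open>Convention: the index set N = {1,2,...} of the paper is identified with
the HOL type nat via n \<mapsto> n - 1. So e k is the paper's e_(k+1), and the
partial sum with index n :: nat is the paper's S_(n+1) = sum of the first n+1 terms.\<close>

definition is_nat_filter :: "nat set set \<Rightarrow> bool" where
  "is_nat_filter F \<longleftrightarrow> F \<noteq> {} \<and> {} \<notin> F
     \<and> (\<forall>A\<in>F. \<forall>B\<in>F. A \<inter> B \<in> F)
     \<and> (\<forall>A\<in>F. \<forall>B. A \<subseteq> B \<longrightarrow> B \<in> F)"

definition F_limit :: "nat set set \<Rightarrow> (nat \<Rightarrow> 'a::real_normed_vector) \<Rightarrow> 'a \<Rightarrow> bool" where
  "F_limit F s x \<longleftrightarrow> (\<forall>\<epsilon>>0. \<exists>A\<in>F. \<forall>n\<in>A. norm (x - s n) < \<epsilon>)"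

definition F_basis :: "nat set set \<Rightarrow> (nat \<Rightarrow> 'a::real_normed_vector) \<Rightarrow> bool" where
  "F_basis F e \<longleftrightarrow> (\<forall>x. \<exists>!a::nat \<Rightarrow> real. F_limit F (\<lambda>n. \<Sum>k\<le>n. a k *\<^sub>R e k) x)"

definition coord_fun :: "nat set set \<Rightarrow> (nat \<Rightarrow> 'a::real_normed_vector) \<Rightarrow> 'a \<Rightarrow> nat \<Rightarrow> real" where
  "coord_fun F e x = (THE a. F_limit F (\<lambda>n. \<Sum>k\<le>n. a k *\<^sub>R e k) x)"

definition partial_sum :: "nat set set \<Rightarrow> (nat \<Rightarrow> 'a::real_normed_vector) \<Rightarrow> nat \<Rightarrow> 'a \<Rightarrow> 'a" where
  "partial_sum F e n x = (\<Sum>k\<le>n. coord_fun F e x k *\<^sub>R e k)"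

definition X_sub :: "nat set set \<Rightarrow> (nat \<Rightarrow> 'a::real_normed_vector) \<Rightarrow> nat set \<Rightarrow> 'a set" where
  "X_sub F e A = {x. bdd_above ((\<lambda>\<nu>. norm (partial_sum F e \<nu> x)) ` A)}"

definition is_filter_base :: "nat set set \<Rightarrow> nat set set \<Rightarrow> bool" where
  "is_filter_base F B \<longleftrightarrow> B \<subseteq> F \<and> (\<forall>A\<in>F. \<exists>C\<in>B. C \<subseteq> A)"

text \<open>Families witnessing the pseudointersection number: strong finite
intersection property but no infinite pseudointersection.\<close>
definition p_witness :: "nat set set \<Rightarrow> bool" where
  "p_witness \<A> \<longleftrightarrow>
     (\<forall>\<C>. finite \<C> \<and> \<C> \<noteq> {} \<and> \<C> \<subseteq> \<A> \<longrightarrow> infinite (\<Inter>\<C>))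
     \<and> \<not> (\<exists>B. infinite B \<and> (\<forall>A\<in>\<A>. finite (B - A)))"

text \<open>chi(F) < p: since both are minima of cardinalities, this holds iff some
base of F has cardinality strictly below that of every p-witness family.\<close>
definition character_lt_p :: "nat set set \<Rightarrow> bool" where
  "character_lt_p F \<longleftrightarrow> (\<exists>B. is_filter_base F B \<and>
     (\<forall>\<A>. p_witness \<A> \<longrightarrow> (card_of B, card_of \<A>) \<in> ordLess))"

end

theory Submission
  imports Defs
begin


locale fbasis =
  fixes F :: "nat set set" and e :: "nat \<Rightarrow> 'a::banach"
  assumes filt: "is_nat_filter F" and basis: "F_basis F e"
begin

abbreviation "S \<equiv> partial_sum F e"
abbreviation "cf \<equiv> coord_fun F e"

lemma F_int: "A \<in> F \<Longrightarrow> B \<in> F \<Longrightarrow> A \<inter> B \<in> F"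
  using filt unfolding is_nat_filter_def by blast

lemma F_sup: "A \<in> F \<Longrightarrow> A \<subseteq> B \<Longrightarrow> B \<in> F"
  using filt unfolding is_nat_filter_def by blast

lemma F_ne: "A \<in> F \<Longrightarrow> A \<noteq> {}"
  using filt unfolding is_nat_filter_def by blast

lemma F_nonempty: "\<exists>A. A \<in> F"
  using filt unfolding is_nat_filter_def by blast

lemma cf_lim: "F_limit F (\<lambda>n. \<Sum>k\<le>n. cf x k *\<^sub>R e k) x"
proof -
  have "\<exists>!a::nat \<Rightarrow> real. F_limit F (\<lambda>n. \<Sum>k\<le>n. a k *\<^sub>R e k) x"
    using basis unfolding F_basis_def by blast
  then show ?thesis unfolding coord_fun_def by (rule theI')
qed

lemma cf_uniq: "F_limit F (\<lambda>n. \<Sum>k\<le>n. a k *\<^sub>R e k) x \<Longrightarrow> cf x = a"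
proof -
  assume a: "F_limit F (\<lambda>n. \<Sum>k\<le>n. a k *\<^sub>R e k) x"
  have "\<exists>!a::nat \<Rightarrow> real. F_limit F (\<lambda>n. \<Sum>k\<le>n. a k *\<^sub>R e k) x"
    using basis unfolding F_basis_def by blast
  then show ?thesis using a cf_lim by blast
qed

lemma S_def': "S n x = (\<Sum>k\<le>n. cf x k *\<^sub>R e k)"
  by (simp add: partial_sum_def)

lemma S_lim: "F_limit F (\<lambda>n. S n x) x"
  using cf_lim by (simp add: S_def')

lemma F_limit_add:
  assumes "F_limit F s x" "F_limit F t y"
  shows "F_limit F (\<lambda>n. s n + t n) (x + y)"
  unfolding F_limit_def
proof (intro allI impI)
  fix \<epsilon> :: real assume "\<epsilon> > 0"
  then obtain A B where A: "A \<in> F" "\<forall>n\<in>A. norm (x - s n) < \<epsilon>/2"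
    and B: "B \<in> F" "\<forall>n\<in>B. norm (y - t n) < \<epsilon>/2"
    using assms unfolding F_limit_def by (meson half_gt_zero)
  have "\<forall>n\<in>A\<inter>B. norm (x + y - (s n + t n)) < \<epsilon>"
  proof
    fix n assume "n \<in> A \<inter> B"
    then have "norm (x - s n) + norm (y - t n) < \<epsilon>" using A B by force
    moreover have "norm (x + y - (s n + t n)) \<le> norm (x - s n) + norm (y - t n)"
      by (metis add_diff_add norm_triangle_ineq)
    ultimately show "norm (x + y - (s n + t n)) < \<epsilon>" by linarith
  qed
  then show "\<exists>A\<in>F. \<forall>n\<in>A. norm (x + y - (s n + t n)) < \<epsilon>"
    using F_int A B by blast
qed

lemma F_limit_scale:
  assumes "F_limit F s x"
  shows "F_limit F (\<lambda>n. c *\<^sub>R s n) (c *\<^sub>R x)"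
  unfolding F_limit_def
proof (intro allI impI)
  fix \<epsilon> :: real assume "\<epsilon> > 0"
  show "\<exists>A\<in>F. \<forall>n\<in>A. norm (c *\<^sub>R x - c *\<^sub>R s n) < \<epsilon>"
  proof (cases "c = 0")
    case True then show ?thesis using F_nonempty \<open>\<epsilon> > 0\<close> by auto
  next
    case False
    then have "\<epsilon> / \<bar>c\<bar> > 0" using \<open>\<epsilon> > 0\<close> by simp
    then obtain A where A: "A \<in> F" "\<forall>n\<in>A. norm (x - s n) < \<epsilon> / \<bar>c\<bar>"
      using assms unfolding F_limit_def by blast
    have "\<forall>n\<in>A. norm (c *\<^sub>R x - c *\<^sub>R s n) < \<epsilon>"
    proof
      fix n assume "n \<in> A"
      then have "norm (x - s n) < \<epsilon> / \<bar>c\<bar>" using A by blast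
      then have "\<bar>c\<bar> * norm (x - s n) < \<epsilon>" using False by (simp add: field_simps)
      then show "norm (c *\<^sub>R x - c *\<^sub>R s n) < \<epsilon>"
        by (metis norm_scaleR scaleR_right_diff_distrib)
    qed
    then show ?thesis using A by blast
  qed
qed

lemma cf_add: "cf (x + y) = (\<lambda>k. cf x k + cf y k)"
  apply (rule cf_uniq)
  using F_limit_add[OF cf_lim[of x] cf_lim[of y]]
  by (simp add: scaleR_add_left sum.distrib)

lemma cf_scale: "cf (c *\<^sub>R x) = (\<lambda>k. c * cf x k)"
  apply (rule cf_uniq)
  using F_limit_scale[OF cf_lim[of x], of c]
  by (simp add: scaleR_sum_right)

lemma S_add: "S n (x + y) = S n x + S n y"
  by (simp add: S_def' cf_add scaleR_add_left sum.distrib)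

lemma S_scale: "S n (c *\<^sub>R x) = c *\<^sub>R S n x"
  by (simp add: S_def' cf_scale scaleR_sum_right)

lemma S_minus: "S n (- x) = - S n x"
  using S_scale[of n "-1" x] by simp

lemma S_diff: "S n (x - y) = S n x - S n y"
  using S_add[of n x "-y"] S_minus by simp

lemma S_zero: "S n 0 = 0"
  using S_scale[of n 0 0] by simp

lemma S_sum: "S n (\<Sum>i<(m::nat). u i) = (\<Sum>i<m. S n (u i))"
  by (induct m) (simp_all add: S_zero S_add)

lemma F_infinite: "A \<in> F \<Longrightarrow> infinite A"
proof
  assume A: "A \<in> F" and fin: "finite A"
  define N where "N = Suc (Max A)"
  have lt: "n \<in> A \<Longrightarrow> n < N" for n using fin N_def by (simp add: le_imp_less_Suc)
  define a where "a = (\<lambda>k. if k = N then cf 0 k + 1 else cf (0::'a) k)"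
  have "F_limit F (\<lambda>n. \<Sum>k\<le>n. a k *\<^sub>R e k) 0"
    unfolding F_limit_def
  proof (intro allI impI)
    fix \<epsilon> :: real assume "\<epsilon> > 0"
    then obtain B where B: "B \<in> F" "\<forall>n\<in>B. norm (0 - (\<Sum>k\<le>n. cf 0 k *\<^sub>R e k)) < \<epsilon>"
      using cf_lim[of 0] unfolding F_limit_def by blast
    have "\<forall>n\<in>A \<inter> B. norm (0 - (\<Sum>k\<le>n. a k *\<^sub>R e k)) < \<epsilon>"
    proof
      fix n assume n: "n \<in> A \<inter> B"
      then have "n < N" using lt by blast
      then have "(\<Sum>k\<le>n. a k *\<^sub>R e k) = (\<Sum>k\<le>n. cf 0 k *\<^sub>R e k)"
        by (intro sum.cong) (auto simp: a_def)
      then show "norm (0 - (\<Sum>k\<le>n. a k *\<^sub>R e k)) < \<epsilon>" using B n by simp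
    qed
    then show "\<exists>A\<in>F. \<forall>n\<in>A. norm (0 - (\<Sum>k\<le>n. a k *\<^sub>R e k)) < \<epsilon>"
      using F_int[OF A B(1)] by blast
  qed
  then have "cf 0 = a" by (rule cf_uniq)
  then show False unfolding a_def by (metis add_cancel_left_right one_neq_zero)
qed

end


lemma closed_span_finite:
  fixes T :: "'a::real_normed_vector set"
  assumes "finite T"
  shows "closed (span T)"
  using assms
proof (induction T rule: finite_induct)
  case empty
  then show ?case by simp
next
  case (insert v T)
  show ?case
  proof (cases "v \<in> span T")
    case True
    then show ?thesis using insert by (simp add: span_redundant)
  next
    case False
    have "open (- span T)" using insert by auto
    then obtain \<delta> where \<delta>: "\<delta> > 0" "ball v \<delta> \<subseteq> - span T"
      using False by (meson ComplI open_contains_ball)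
    have d1: "\<delta> \<le> norm (v - s)" if "s \<in> span T" for s
    proof (rule ccontr)
      assume "\<not> \<delta> \<le> norm (v - s)"
      then have "s \<in> ball v \<delta>" by (simp add: dist_norm)
      then show False using \<delta> that by blast
    qed
    have d2: "\<bar>a\<bar> * \<delta> \<le> norm (a *\<^sub>R v - s)" if "s \<in> span T" for s a
    proof (cases "a = 0")
      case True then show ?thesis by simp
    next
      case False
      have "(1/a) *\<^sub>R s \<in> span T" using that span_scale by blast
      then have "\<delta> \<le> norm (v - (1/a) *\<^sub>R s)" by (rule d1)
      then have "\<bar>a\<bar> * \<delta> \<le> \<bar>a\<bar> * norm (v - (1/a) *\<^sub>R s)"
        by (simp add: mult_left_mono)
      also have "\<dots> = norm (a *\<^sub>R (v - (1/a) *\<^sub>R s))" by simp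
      also have "a *\<^sub>R (v - (1/a) *\<^sub>R s) = a *\<^sub>R v - s"
        using False by (simp add: scaleR_right_diff_distrib)
      finally show ?thesis .
    qed
    show ?thesis
      unfolding closed_sequential_limits
    proof (intro allI impI, elim conjE)
      fix w l
      assume w: "\<forall>n. w n \<in> span (insert v T)" and wl: "w \<longlonglongrightarrow> l"
      have "\<forall>n. \<exists>k. w n - k *\<^sub>R v \<in> span T" using w by (simp add: span_insert)
      then obtain k where k: "\<And>n. w n - k n *\<^sub>R v \<in> span T" by metis
      have cw: "Cauchy w" using wl by (rule LIMSEQ_imp_Cauchy)
      have ineq: "\<bar>k n - k m\<bar> * \<delta> \<le> norm (w n - w m)" for n m
      proof -
        have "(w m - k m *\<^sub>R v) - (w n - k n *\<^sub>R v) \<in> span T"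
          using k span_diff by blast
        from d2[OF this, of "k n - k m"]
        show ?thesis by (simp add: algebra_simps)
      qed
      have "Cauchy k"
      proof (rule CauchyI)
        fix \<epsilon> :: real assume "\<epsilon> > 0"
        then have "\<epsilon> * \<delta> > 0" using \<delta> by simp
        then obtain M where M: "\<forall>m\<ge>M. \<forall>n\<ge>M. norm (w m - w n) < \<epsilon> * \<delta>"
          using cw CauchyD by blast
        show "\<exists>M. \<forall>m\<ge>M. \<forall>n\<ge>M. norm (k m - k n) < \<epsilon>"
        proof (intro exI allI impI)
          fix m n assume "M \<le> m" "M \<le> n"
          then have "\<bar>k m - k n\<bar> * \<delta> < \<epsilon> * \<delta>" using M ineq[of m n] by force
          then show "norm (k m - k n) < \<epsilon>" using \<delta> by simp
        qed
      qed
      then obtain \<kappa> where \<kappa>: "k \<longlonglongrightarrow> \<kappa>" using Cauchy_convergent_iff convergent_def by blast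
      have "(\<lambda>n. w n - k n *\<^sub>R v) \<longlonglongrightarrow> l - \<kappa> *\<^sub>R v"
        by (intro tendsto_intros wl \<kappa>)
      then have "l - \<kappa> *\<^sub>R v \<in> span T"
        using insert.IH k by (rule_tac closed_sequentially) auto
      then show "l \<in> span (insert v T)" by (auto simp: span_insert)
    qed
  qed
qed

lemma span_image_sum:
  fixes e :: "nat \<Rightarrow> 'a::real_vector"
  assumes "finite K" "x \<in> span (e ` K)"
  shows "\<exists>g. x = (\<Sum>k\<in>K. g k *\<^sub>R e k)"
proof -
  have "subspace {x. \<exists>g. x = (\<Sum>k\<in>K. g k *\<^sub>R e k)}"
    unfolding subspace_def
  proof (intro conjI allI ballI)
    show "0 \<in> {x. \<exists>g. x = (\<Sum>k\<in>K. g k *\<^sub>R e k)}"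
      by (intro CollectI exI[of _ "\<lambda>_. 0"]) simp
  next
    fix x y assume "x \<in> {x. \<exists>g. x = (\<Sum>k\<in>K. g k *\<^sub>R e k)}" "y \<in> {x. \<exists>g. x = (\<Sum>k\<in>K. g k *\<^sub>R e k)}"
    then obtain g h where "x = (\<Sum>k\<in>K. g k *\<^sub>R e k)" "y = (\<Sum>k\<in>K. h k *\<^sub>R e k)" by blast
    then show "x + y \<in> {x. \<exists>g. x = (\<Sum>k\<in>K. g k *\<^sub>R e k)}"
      by (intro CollectI exI[of _ "\<lambda>k. g k + h k"]) (simp add: scaleR_add_left sum.distrib)
  next
    fix c x assume "x \<in> {x. \<exists>g. x = (\<Sum>k\<in>K. g k *\<^sub>R e k)}"
    then obtain g where "x = (\<Sum>k\<in>K. g k *\<^sub>R e k)" by blast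
    then show "c *\<^sub>R x \<in> {x. \<exists>g. x = (\<Sum>k\<in>K. g k *\<^sub>R e k)}"
      by (intro CollectI exI[of _ "\<lambda>k. c * g k"]) (simp add: scaleR_sum_right)
  qed
  moreover have "e j \<in> {x. \<exists>g. x = (\<Sum>k\<in>K. g k *\<^sub>R e k)}" if "j \<in> K" for j
    using assms(1) that
  proof -
    have "(\<Sum>k\<in>K. (if k = j then 1 else 0) *\<^sub>R e k) = (\<Sum>k\<in>K. if k = j then e k else 0)"
      by (intro sum.cong) auto
    also have "\<dots> = e j" using assms(1) that by simp
    finally show ?thesis by (intro CollectI exI[of _ "\<lambda>k. if k = j then 1 else 0"]) simp
  qed
  ultimately show ?thesis
    using span_induct[OF assms(2), of "\<lambda>x. \<exists>g. x = (\<Sum>k\<in>K. g k *\<^sub>R e k)"] by blast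
qed



lemma summable_bound:
  fixes f :: "nat \<Rightarrow> 'a::banach"
  assumes "\<And>i. norm (f i) \<le> M i" "summable M"
  shows "summable f" "norm (suminf f) \<le> suminf M"
    "\<And>n. norm (\<Sum>i. f (i + n)) \<le> (\<Sum>i. M (i + n))"
proof -
  have sn: "summable (\<lambda>i. norm (f i))"
    using assms by (intro summable_comparison_test[OF _ assms(2)]) auto
  then show "summable f" by (rule summable_norm_cancel)
  show "norm (suminf f) \<le> suminf M"
    using summable_norm[OF sn] suminf_le[of "\<lambda>i. norm (f i)" M] assms sn by force
  fix n
  have sn': "summable (\<lambda>i. norm (f (i + n)))" using sn summable_iff_shift[of "\<lambda>i. norm (f i)" n] by simp
  have sM': "summable (\<lambda>i. M (i + n))" using assms(2) summable_iff_shift[of M n] by simp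
  show "norm (\<Sum>i. f (i + n)) \<le> (\<Sum>i. M (i + n))"
    using summable_norm[OF sn'] suminf_le[of "\<lambda>i. norm (f (i + n))" "\<lambda>i. M (i + n)"] assms sn' sM'
    by force
qed

context fbasis
begin

lemma S_split:
  assumes "a \<le> b"
  shows "S b x = S a x + (\<Sum>k\<in>{a<..b}. cf x k *\<^sub>R e k)"
proof -
  have "{..b} = {..a} \<union> {a<..b}" using assms by auto
  moreover have "{..a} \<inter> {a<..b} = {}" by auto
  ultimately show ?thesis unfolding S_def' by (simp add: sum.union_disjoint)
qed

lemma series_XC:
  assumes C: "C \<in> F" and Mb: "\<And>i \<nu>. \<nu> \<in> C \<Longrightarrow> norm (S \<nu> (u i)) \<le> M i"
    and sM: "summable M" and y: "(\<lambda>n. \<Sum>i<n. u i) \<longlonglongrightarrow> y"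
  shows "\<forall>\<nu>\<in>C. norm (S \<nu> y) \<le> suminf M"
proof -
  have infC: "infinite C" using C F_infinite by blast
  define w where "w \<nu> = (\<Sum>i. S \<nu> (u i))" for \<nu>
  have sw: "summable (\<lambda>i. S \<nu> (u i))" if "\<nu> \<in> C" for \<nu>
    using summable_bound(1)[OF Mb[OF that] sM] .
  have wb: "norm (w \<nu>) \<le> suminf M" if "\<nu> \<in> C" for \<nu>
    unfolding w_def using summable_bound(2)[OF Mb[OF that] sM] .
  define c where "c = enumerate C"
  have cC: "c j \<in> C" for j unfolding c_def using infC by (simp add: enumerate_in_set)
  have cmono: "strict_mono c" unfolding c_def using infC by (simp add: strict_mono_enumerate)
  have crange: "range c = C" unfolding c_def using infC by (simp add: range_enumerate)
  define K where "K j = (if j = 0 then {..c 0} else {c (j - 1)<..c j})" for j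
  define D where "D j = w (c j) - (if j = 0 then 0 else w (c (j - 1)))" for j
  have finK: "finite (K j)" for j by (simp add: K_def)
  have Dspan: "D j \<in> span (e ` K j)" for j
  proof -
    define T where "T x = S (c j) x - (if j = 0 then 0 else S (c (j - 1)) x)" for x
    have Tsum: "T x = (\<Sum>k\<in>K j. cf x k *\<^sub>R e k)" for x
    proof (cases "j = 0")
      case True then show ?thesis by (simp add: T_def K_def S_def')
    next
      case False
      then have "c (j - 1) \<le> c j" using cmono by (simp add: strict_mono_less_eq)
      from S_split[OF this, of x] False show ?thesis by (simp add: T_def K_def)
    qed
    have Tspan: "T x \<in> span (e ` K j)" for x
      unfolding Tsum by (intro span_sum span_scale span_base) auto
    have sT: "summable (\<lambda>i. T (u i))" using sw cC unfolding T_def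
      by (cases "j = 0") (auto intro: summable_diff)
    have "D j = (\<Sum>i. T (u i))"
      using sw cC unfolding D_def w_def T_def
      by (cases "j = 0") (auto simp: suminf_diff)
    moreover have "(\<lambda>n. \<Sum>i<n. T (u i)) \<longlonglongrightarrow> (\<Sum>i. T (u i))"
      using sT by (rule summable_LIMSEQ)
    moreover have "\<forall>n. (\<Sum>i<n. T (u i)) \<in> span (e ` K j)"
      using Tspan by (auto intro: span_sum)
    ultimately show ?thesis
      using closed_span_finite[of "e ` K j"] finK by (metis closed_sequentially finite_imageI)
  qed
  have "\<forall>j. \<exists>g. D j = (\<Sum>k\<in>K j. g k *\<^sub>R e k)"
    using span_image_sum[OF finK Dspan] by blast
  then obtain g where g: "\<And>j. D j = (\<Sum>k\<in>K j. g j k *\<^sub>R e k)" by metis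
  define blk where "blk k = (LEAST j. k \<le> c j)" for k
  have blkK: "blk k = j" if "k \<in> K j" for k j
  proof -
    have kc: "k \<le> c j" using that by (auto simp: K_def split: if_splits)
    have "\<not> k \<le> c j'" if "j' < j" for j'
    proof -
      have "c j' \<le> c (j - 1)" using \<open>j' < j\<close> cmono by (simp add: strict_mono_less_eq)
      moreover have "c (j - 1) < k" using \<open>k \<in> K j\<close> \<open>j' < j\<close> by (auto simp: K_def)
      ultimately show ?thesis by simp
    qed
    then show ?thesis unfolding blk_def
      by (intro Least_equality kc) (meson not_le)
  qed
  define b where "b k = g (blk k) k" for k
  have bsum: "(\<Sum>k\<le>c j. b k *\<^sub>R e k) = w (c j)" for j
  proof (induction j)
    case 0
    have "blk k = 0" if "k \<le> c 0" for k using blkK[of k 0] that by (simp add: K_def)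
    then have "(\<Sum>k\<le>c 0. b k *\<^sub>R e k) = (\<Sum>k\<in>K 0. g 0 k *\<^sub>R e k)"
      by (intro sum.cong) (auto simp: K_def b_def)
    also have "\<dots> = D 0" by (simp add: g)
    finally show ?case by (simp add: D_def)
  next
    case (Suc j)
    have le: "c j \<le> c (Suc j)" using cmono by (simp add: strict_mono_less_eq)
    have "{..c (Suc j)} = {..c j} \<union> K (Suc j)" using le by (auto simp: K_def)
    moreover have "{..c j} \<inter> K (Suc j) = {}" by (auto simp: K_def)
    ultimately have "(\<Sum>k\<le>c (Suc j). b k *\<^sub>R e k) = (\<Sum>k\<le>c j. b k *\<^sub>R e k) + (\<Sum>k\<in>K (Suc j). b k *\<^sub>R e k)"
      by (simp add: sum.union_disjoint finK)
    also have "(\<Sum>k\<in>K (Suc j). b k *\<^sub>R e k) = (\<Sum>k\<in>K (Suc j). g (Suc j) k *\<^sub>R e k)"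
      by (intro sum.cong) (auto simp: b_def blkK)
    also have "\<dots> = D (Suc j)" by (simp add: g)
    finally show ?case using Suc.IH by (simp add: D_def)
  qed
  have bw: "(\<Sum>k\<le>\<nu>. b k *\<^sub>R e k) = w \<nu>" if "\<nu> \<in> C" for \<nu>
  proof -
    obtain j where "\<nu> = c j" using \<open>\<nu> \<in> C\<close> crange by blast
    then show ?thesis using bsum by simp
  qed
  have lim: "F_limit F (\<lambda>n. \<Sum>k\<le>n. b k *\<^sub>R e k) y"
    unfolding F_limit_def
  proof (intro allI impI)
    fix \<epsilon> :: real assume \<epsilon>: "\<epsilon> > 0"
    then have \<epsilon>3: "\<epsilon> / 3 > 0" by simp
    obtain N1 where N1: "\<forall>n\<ge>N1. norm (\<Sum>i. M (i + n)) < \<epsilon> / 3"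
      using suminf_exist_split[OF \<epsilon>3 sM] by blast
    obtain N2 where N2: "\<forall>n\<ge>N2. norm ((\<Sum>i<n. u i) - y) < \<epsilon> / 3"
      using y \<epsilon>3 unfolding LIMSEQ_iff by blast
    define n where "n = max N1 N2"
    define Y where "Y = (\<Sum>i<n. u i)"
    have t1: "norm (\<Sum>i. M (i + n)) < \<epsilon> / 3" using N1 n_def by simp
    have t2: "norm (y - Y) < \<epsilon> / 3" using N2 n_def Y_def by (simp add: norm_minus_commute)
    obtain A where A: "A \<in> F" "\<forall>\<nu>\<in>A. norm (Y - S \<nu> Y) < \<epsilon> / 3"
      using S_lim[of Y] \<epsilon>3 unfolding F_limit_def by blast
    have "\<forall>\<nu>\<in>A \<inter> C. norm (y - (\<Sum>k\<le>\<nu>. b k *\<^sub>R e k)) < \<epsilon>"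
    proof
      fix \<nu> assume \<nu>: "\<nu> \<in> A \<inter> C"
      have "w \<nu> = (\<Sum>i. S \<nu> (u (i + n))) + (\<Sum>i<n. S \<nu> (u i))"
        unfolding w_def using suminf_split_initial_segment[OF sw[of \<nu>], of n] \<nu> by simp
      also have "(\<Sum>i<n. S \<nu> (u i)) = S \<nu> Y" by (simp add: Y_def S_sum)
      finally have weq: "w \<nu> - S \<nu> Y = (\<Sum>i. S \<nu> (u (i + n)))" by simp
      have "norm (\<Sum>i. S \<nu> (u (i + n))) \<le> (\<Sum>i. M (i + n))"
        using summable_bound(3)[of "\<lambda>i. S \<nu> (u i)" M n] Mb \<nu> sM by auto
      then have t3: "norm (w \<nu> - S \<nu> Y) < \<epsilon> / 3" using weq t1 by simp
      have "norm (y - w \<nu>) \<le> norm (y - Y) + norm (Y - S \<nu> Y) + norm (S \<nu> Y - w \<nu>)"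
        by (metis (no_types, lifting) add_diff_eq diff_add_cancel norm_triangle_ineq order_trans add_right_mono)
      moreover have "norm (S \<nu> Y - w \<nu>) < \<epsilon> / 3" using t3 by (simp add: norm_minus_commute)
      ultimately have "norm (y - w \<nu>) < \<epsilon>" using t2 A \<nu> by force
      then show "norm (y - (\<Sum>k\<le>\<nu>. b k *\<^sub>R e k)) < \<epsilon>" using bw \<nu> by simp
    qed
    then show "\<exists>A\<in>F. \<forall>n\<in>A. norm (y - (\<Sum>k\<le>n. b k *\<^sub>R e k)) < \<epsilon>"
      using F_int[OF A(1) C] by blast
  qed
  then have "cf y = b" by (rule cf_uniq)
  then have "S \<nu> y = w \<nu>" if "\<nu> \<in> C" for \<nu> using bw[OF that] by (simp add: S_def')
  then show ?thesis using wb by simp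
qed

end


context fbasis
begin

lemma approx_to_XC:
  assumes C: "C \<in> F" and c: "c \<ge> 0"
    and ap: "\<And>z. \<exists>u. (\<forall>\<nu>\<in>C. norm (S \<nu> u) \<le> c * norm z) \<and> norm (z - u) \<le> norm z / 2"
  shows "X_sub F e C = UNIV"
proof -
  obtain G where G: "\<And>z. (\<forall>\<nu>\<in>C. norm (S \<nu> (G z)) \<le> c * norm z) \<and> norm (z - G z) \<le> norm z / 2"
    using ap by metis
  show ?thesis
  proof (rule set_eqI, rule iffI)
    fix x :: 'a
    define zz where "zz n = ((\<lambda>z. z - G z) ^^ n) x" for n
    have zzS: "zz (Suc n) = zz n - G (zz n)" for n by (simp add: zz_def)
    have zzb: "norm (zz n) \<le> norm x / 2 ^ n" for n
    proof (induction n)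
      case 0 then show ?case by (simp add: zz_def)
    next
      case (Suc n)
      have "norm (zz (Suc n)) \<le> norm (zz n) / 2" using G zzS by simp
      also have "\<dots> \<le> norm x / 2 ^ n / 2" using Suc by simp
      finally show ?case by simp
    qed
    define u where "u i = G (zz i)" for i
    have usum: "(\<Sum>i<n. u i) = x - zz n" for n
      by (induction n) (simp_all add: zz_def u_def zzS[unfolded zz_def])
    define M where "M i = c * norm x * (1/2) ^ i" for i
    have sM: "summable M" unfolding M_def
      by (intro summable_mult summable_geometric) simp
    have Mb: "norm (S \<nu> (u i)) \<le> M i" if "\<nu> \<in> C" for i \<nu>
    proof -
      have "norm (S \<nu> (u i)) \<le> c * norm (zz i)" using G that unfolding u_def by blast
      also have "\<dots> \<le> c * (norm x / 2 ^ i)" using zzb[of i] c by (metis mult_left_mono)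
      also have "c * (norm x / 2 ^ i) = M i" unfolding M_def by (simp add: power_divide)
      finally show ?thesis .
    qed
    have g0: "(\<lambda>n. norm x * (1 / 2) ^ n) \<longlonglongrightarrow> 0"
      using tendsto_mult_right_zero[OF LIMSEQ_power_zero[of "1/2::real"], of "norm x"] by simp
    have "norm (norm (zz n)) \<le> norm x * (1/2) ^ n" for n
      using zzb[of n] by (simp add: power_divide)
    then have "\<forall>\<^sub>F n in sequentially. norm (norm (zz n)) \<le> norm x * (1/2) ^ n"
      by (simp add: always_eventually)
    then have "(\<lambda>n. norm (zz n)) \<longlonglongrightarrow> 0" by (rule Lim_null_comparison[OF _ g0])
    then have "zz \<longlonglongrightarrow> 0" by (rule tendsto_norm_zero_cancel)
    then have "(\<lambda>n. \<Sum>i<n. u i) \<longlonglongrightarrow> x"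
      unfolding usum using tendsto_diff[OF tendsto_const[of x], of zz 0] by simp
    then have "\<forall>\<nu>\<in>C. norm (S \<nu> x) \<le> suminf M"
      using series_XC[where u=u and M=M and C=C and y=x] C Mb sM by blast
    then show "x \<in> X_sub F e C"
      unfolding X_sub_def by (intro CollectI bdd_aboveI2[where M="suminf M"]) blast
  qed simp
qed

lemma open_map:
  assumes C: "C \<in> F" and int: "interior (closure {x. \<forall>\<nu>\<in>C. norm (S \<nu> x) \<le> m}) \<noteq> {}"
  shows "X_sub F e C = UNIV"
proof -
  let ?U = "{x. \<forall>\<nu>\<in>C. norm (S \<nu> x) \<le> m}"
  obtain x0 where "x0 \<in> interior (closure ?U)" using int by blast
  then obtain r where r: "r > 0" "ball x0 r \<subseteq> closure ?U"
    by (meson open_contains_ball open_interior interior_subset subset_trans)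
  have ap1: "\<exists>u. (\<forall>\<nu>\<in>C. norm (S \<nu> u) \<le> 2 * \<bar>m\<bar>) \<and> norm (z - u) < \<epsilon>"
    if z: "norm z < r" and \<epsilon>: "\<epsilon> > 0" for z \<epsilon>
  proof -
    have "x0 + z \<in> closure ?U" using r z by (auto simp: dist_norm)
    then obtain p where p: "p \<in> ?U" "dist p (x0 + z) < \<epsilon>/2"
      using \<epsilon> closure_approachable half_gt_zero by blast
    have "x0 \<in> closure ?U" using r by auto
    then obtain q where q: "q \<in> ?U" "dist q x0 < \<epsilon>/2"
      using \<epsilon> closure_approachable half_gt_zero by blast
    have "\<forall>\<nu>\<in>C. norm (S \<nu> (p - q)) \<le> 2 * \<bar>m\<bar>"
    proof
      fix \<nu> assume "\<nu> \<in> C"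
      then have "norm (S \<nu> p) \<le> m" "norm (S \<nu> q) \<le> m" using p q by auto
      then show "norm (S \<nu> (p - q)) \<le> 2 * \<bar>m\<bar>"
        unfolding S_diff by (smt (verit) norm_triangle_ineq4)
    qed
    moreover have "norm (z - (p - q)) < \<epsilon>"
    proof -
      have "z - (p - q) = (x0 + z - p) - (x0 - q)" by (simp add: algebra_simps)
      then have "norm (z - (p - q)) \<le> norm (x0 + z - p) + norm (x0 - q)"
        by (metis norm_triangle_ineq4)
      moreover have "norm (x0 + z - p) < \<epsilon>/2" "norm (x0 - q) < \<epsilon>/2"
        using p q by (simp_all add: dist_norm norm_minus_commute)
      ultimately show ?thesis by linarith
    qed
    ultimately show ?thesis by blast
  qed
  define c where "c = 4 * \<bar>m\<bar> / r"
  have c0: "c \<ge> 0" using r by (simp add: c_def)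
  have ap2: "\<exists>u. (\<forall>\<nu>\<in>C. norm (S \<nu> u) \<le> c * norm z) \<and> norm (z - u) < \<epsilon>"
    if \<epsilon>: "\<epsilon> > 0" for z \<epsilon>
  proof (cases "z = 0")
    case True
    then show ?thesis using \<epsilon> by (intro exI[of _ 0]) (simp add: S_zero)
  next
    case False
    define t where "t = r / (2 * norm z)"
    have t0: "t > 0" using r False by (simp add: t_def)
    have "norm (t *\<^sub>R z) < r" using r False by (simp add: t_def)
    then obtain u' where u': "\<forall>\<nu>\<in>C. norm (S \<nu> u') \<le> 2 * \<bar>m\<bar>" "norm (t *\<^sub>R z - u') < t * \<epsilon>"
      using ap1 \<epsilon> t0 by (meson mult_pos_pos)
    define u where "u = (1/t) *\<^sub>R u'"
    have "\<forall>\<nu>\<in>C. norm (S \<nu> u) \<le> c * norm z"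
    proof
      fix \<nu> assume "\<nu> \<in> C"
      have "norm (S \<nu> u) = (1/t) * norm (S \<nu> u')" using t0 by (simp add: u_def S_scale)
      also have "\<dots> \<le> (1/t) * (2 * \<bar>m\<bar>)" using u' \<open>\<nu> \<in> C\<close> t0 by (simp add: divide_right_mono)
      also have "\<dots> = c * norm z" using r False by (simp add: t_def c_def field_simps)
      finally show "norm (S \<nu> u) \<le> c * norm z" .
    qed
    moreover have "norm (z - u) < \<epsilon>"
    proof -
      have "z - u = (1/t) *\<^sub>R (t *\<^sub>R z - u')" using t0 by (simp add: u_def algebra_simps)
      then have "norm (z - u) = (1/t) * norm (t *\<^sub>R z - u')" using t0 by simp
      also have "\<dots> < (1/t) * (t * \<epsilon>)" using u' t0 by (intro mult_strict_left_mono) simp_all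
      finally show ?thesis using t0 by simp
    qed
    ultimately show ?thesis by blast
  qed
  have ap3: "\<exists>u. (\<forall>\<nu>\<in>C. norm (S \<nu> u) \<le> c * norm z) \<and> norm (z - u) \<le> norm z / 2" for z
  proof (cases "z = 0")
    case True
    then show ?thesis by (intro exI[of _ 0]) (simp add: S_zero)
  next
    case False
    then show ?thesis using ap2[of "norm z / 2" z] by (meson less_imp_le zero_less_norm_iff half_gt_zero)
  qed
  show ?thesis by (rule approx_to_XC[OF C c0 ap3])
qed

end


definition ballc :: "(nat \<Rightarrow> 'a::metric_space) \<Rightarrow> nat \<times> nat \<Rightarrow> 'a set" where
  "ballc dn s = cball (dn (fst s)) ((1/2) ^ snd s)"

definition nested :: "(nat \<Rightarrow> 'a::metric_space) \<Rightarrow> nat \<times> nat \<Rightarrow> nat \<times> nat \<Rightarrow> bool" where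
  "nested dn s s' \<longleftrightarrow> snd s < snd s' \<and> ballc dn s' \<subseteq> ball (dn (fst s)) ((1/2) ^ snd s)"

definition valid :: "(nat \<Rightarrow> 'a::metric_space) \<Rightarrow> (nat \<times> nat) list \<Rightarrow> bool" where
  "valid dn l \<longleftrightarrow> (\<forall>j<length l. nested dn (from_nat j) (l ! j))"

definition Yset :: "(nat \<Rightarrow> 'a::metric_space) \<Rightarrow> 'a set \<Rightarrow> nat \<Rightarrow> (nat \<times> nat) list set" where
  "Yset dn N mm = {l. valid dn l \<and> mm \<le> length l \<and> (\<forall>j<length l. ballc dn (l ! j) \<inter> N = {})}"

lemma step_exists:
  fixes dn :: "nat \<Rightarrow> 'a::real_normed_vector"
  assumes dense: "\<And>x \<epsilon>. \<epsilon> > 0 \<Longrightarrow> \<exists>i. dist (dn i) x < \<epsilon>"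
    and N: "closed N" "interior N = {}"
  shows "\<exists>s'. nested dn s s' \<and> ballc dn s' \<inter> N = {}"
proof -
  obtain i k where s: "s = (i, k)" by fastforce
  let ?B = "ball (dn i) ((1/2) ^ k)"
  have "\<not> ?B \<subseteq> N"
  proof
    assume "?B \<subseteq> N"
    then have "?B \<subseteq> interior N" by (simp add: interior_maximal)
    moreover have "dn i \<in> ?B" by simp
    ultimately show False using N by blast
  qed
  then obtain y where y: "y \<in> ?B" "y \<notin> N" by blast
  have "open (- N \<inter> ?B)" using N by auto
  then obtain \<rho> where \<rho>: "\<rho> > 0" "ball y \<rho> \<subseteq> - N \<inter> ?B"
    using y by (meson ComplI IntI open_contains_ball)
  obtain k' where k': "(1/2::real) ^ k' < \<rho> / 3" "k < k'"
  proof -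
    obtain n where n: "(1/2::real) ^ n < \<rho> / 3"
      using real_arch_pow_inv[of "\<rho>/3" "1/2"] \<rho> by auto
    have "(1/2::real) ^ (max n (Suc k)) \<le> (1/2) ^ n"
      by (intro power_decreasing) auto
    then have "(1/2::real) ^ (max n (Suc k)) < \<rho> / 3" using n by linarith
    then show ?thesis by (intro that[of "max n (Suc k)"]) auto
  qed
  obtain i' where i': "dist (dn i') y < \<rho> / 3" using dense \<rho> by (meson zero_less_divide_iff zero_less_numeral)
  have "ballc dn (i', k') \<subseteq> ball y \<rho>"
  proof
    fix z assume "z \<in> ballc dn (i', k')"
    then have "dist (dn i') z \<le> (1/2) ^ k'" by (simp add: ballc_def)
    then have "dist y z < \<rho>" using \<rho>(1) i' k' dist_triangle[of y z "dn i'"]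
      by (simp add: dist_commute)
    then show "z \<in> ball y \<rho>" by simp
  qed
  then have "nested dn s (i', k') \<and> ballc dn (i', k') \<inter> N = {}"
    using \<rho> k' s by (auto simp: nested_def)
  then show ?thesis by blast
qed

lemma interior_finite_Union_closed:
  fixes N :: "'i \<Rightarrow> 'a::topological_space set"
  assumes "finite J" "\<And>\<alpha>. \<alpha> \<in> J \<Longrightarrow> closed (N \<alpha>) \<and> interior (N \<alpha>) = {}"
  shows "closed (\<Union>\<alpha>\<in>J. N \<alpha>) \<and> interior (\<Union>\<alpha>\<in>J. N \<alpha>) = {}"
  using assms
proof (induction J rule: finite_induct)
  case empty then show ?case by simp
next
  case (insert a J)
  then have cl: "closed (\<Union>\<alpha>\<in>J. N \<alpha>)" and int: "interior (\<Union>\<alpha>\<in>J. N \<alpha>) = {}"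
    and a: "closed (N a)" "interior (N a) = {}" by auto
  have "interior ((\<Union>\<alpha>\<in>J. N \<alpha>) \<union> N a) = interior (\<Union>\<alpha>\<in>J. N \<alpha>)"
    by (rule interior_closed_Un_empty_interior[OF cl a(2)])
  then show ?case using cl a int by (simp add: Un_commute closed_Un)
qed

lemma Yset_infinite:
  fixes dn :: "nat \<Rightarrow> 'a::real_normed_vector"
  assumes dense: "\<And>x \<epsilon>. \<epsilon> > 0 \<Longrightarrow> \<exists>i. dist (dn i) x < \<epsilon>"
    and J: "finite J"
    and N: "\<And>\<alpha>. \<alpha> \<in> J \<Longrightarrow> closed (N \<alpha>) \<and> interior (N \<alpha>) = {}"
  shows "infinite (\<Inter>\<alpha>\<in>J. Yset dn (N \<alpha>) (m \<alpha>))"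
proof
  let ?NN = "\<Union>\<alpha>\<in>J. N \<alpha>"
  have NN: "closed ?NN" "interior ?NN = {}" using interior_finite_Union_closed[OF J N] by auto
  have "\<forall>s. \<exists>s'. nested dn s s' \<and> ballc dn s' \<inter> ?NN = {}"
    using step_exists[OF dense NN] by blast
  then obtain st where st: "\<And>s. nested dn s (st s) \<and> ballc dn (st s) \<inter> ?NN = {}" by metis
  define lst where "lst L = map (\<lambda>j. st (from_nat j)) [0..<L]" for L
  define Mx where "Mx = (\<Sum>\<alpha>\<in>J. m \<alpha>)"
  have mle: "m \<alpha> \<le> Mx" if "\<alpha> \<in> J" for \<alpha>
    unfolding Mx_def using J that by (simp add: member_le_sum)
  have inY: "lst L \<in> (\<Inter>\<alpha>\<in>J. Yset dn (N \<alpha>) (m \<alpha>))" if "Mx \<le> L" for L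
  proof -
    have "valid dn (lst L)" using st by (simp add: valid_def lst_def)
    moreover have "\<forall>j<length (lst L). ballc dn (lst L ! j) \<inter> N \<alpha> = {}" if "\<alpha> \<in> J" for \<alpha>
      using st that by (fastforce simp: lst_def)
    ultimately show ?thesis using mle \<open>Mx \<le> L\<close> by (fastforce simp: Yset_def lst_def)
  qed
  assume fin: "finite (\<Inter>\<alpha>\<in>J. Yset dn (N \<alpha>) (m \<alpha>))"
  then obtain B where B: "\<forall>l\<in>(\<Inter>\<alpha>\<in>J. Yset dn (N \<alpha>) (m \<alpha>)). length l \<le> B"
    using finite_nat_set_iff_bounded_le[of "length ` (\<Inter>\<alpha>\<in>J. Yset dn (N \<alpha>) (m \<alpha>))"] by auto
  have "length (lst (Mx + B + 1)) \<le> B" using B inY[of "Mx + B + 1"] by auto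
  then show False by (simp add: lst_def)
qed



lemma avoid_all:
  fixes dn :: "nat \<Rightarrow> 'a::banach"
  assumes Z: "infinite Z"
    and fin: "\<And>\<alpha>. \<alpha> \<in> I \<Longrightarrow> finite (Z - Yset dn (N \<alpha>) (m \<alpha>))"
    and big: "\<And>n. \<exists>\<alpha>\<in>I. n < m \<alpha>"
  shows "\<exists>x. \<forall>\<alpha>\<in>I. x \<notin> N \<alpha>"
proof -
  have ex: "\<exists>l. l \<in> Z \<and> valid dn l \<and> n < length l" for n
  proof -
    obtain \<alpha> where \<alpha>: "\<alpha> \<in> I" "n < m \<alpha>" using big by blast
    have "Z \<inter> Yset dn (N \<alpha>) (m \<alpha>) \<noteq> {}"
    proof
      assume "Z \<inter> Yset dn (N \<alpha>) (m \<alpha>) = {}"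
      then have "Z - Yset dn (N \<alpha>) (m \<alpha>) = Z" by blast
      then show False using fin[OF \<alpha>(1)] Z by simp
    qed
    then show ?thesis using \<alpha> by (force simp: Yset_def)
  qed
  define pick where "pick n = (SOME l. l \<in> Z \<and> valid dn l \<and> n < length l)" for n
  have pick: "pick n \<in> Z \<and> valid dn (pick n) \<and> n < length (pick n)" for n
    unfolding pick_def using ex[of n] by (rule someI_ex)
  define \<sigma> where "\<sigma> = rec_nat (0, 0) (\<lambda>i s. pick (max (to_nat s) i) ! to_nat s)"
  have \<sigma>S: "\<sigma> (Suc i) = pick (max (to_nat (\<sigma> i)) i) ! to_nat (\<sigma> i)" for i
    by (simp add: \<sigma>_def)
  have nest: "nested dn (\<sigma> i) (\<sigma> (Suc i))" for i
  proof -
    let ?l = "pick (max (to_nat (\<sigma> i)) i)"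
    have "to_nat (\<sigma> i) < length ?l" using pick[of "max (to_nat (\<sigma> i)) i"] by simp
    then have "nested dn (from_nat (to_nat (\<sigma> i))) (?l ! to_nat (\<sigma> i))"
      using pick[of "max (to_nat (\<sigma> i)) i"] unfolding valid_def by blast
    then show ?thesis by (simp add: \<sigma>S)
  qed
  define c where "c i = dn (fst (\<sigma> i))" for i
  define r where "r i = snd (\<sigma> i)" for i
  have sub1: "ballc dn (\<sigma> (Suc i)) \<subseteq> ballc dn (\<sigma> i)" for i
    using nest[of i] by (auto simp: nested_def ballc_def)
  have sub: "ballc dn (\<sigma> j) \<subseteq> ballc dn (\<sigma> i)" if "i \<le> j" for i j
    using that
  proof (induction j)
    case 0 then show ?case by simp
  next
    case (Suc j)
    then show ?case
      using sub1[of j] by (metis le_Suc_eq order_refl subset_trans)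
  qed
  have rge: "i \<le> r i" for i
  proof (induction i)
    case 0 then show ?case by simp
  next
    case (Suc i)
    then show ?case using nest[of i] by (simp add: nested_def r_def)
  qed
  have cin: "c i \<in> ballc dn (\<sigma> i)" for i by (simp add: c_def ballc_def)
  have cdist: "dist (c i) (c j) \<le> (1/2) ^ i" if "i \<le> j" for i j
  proof -
    have "c j \<in> ballc dn (\<sigma> i)" using sub[OF that] cin by blast
    then have "dist (c i) (c j) \<le> (1/2) ^ r i" by (simp add: ballc_def c_def r_def)
    also have "(1/2::real) ^ r i \<le> (1/2) ^ i" using rge by (intro power_decreasing) auto
    finally show ?thesis .
  qed
  have "Cauchy c"
  proof (rule metric_CauchyI)
    fix \<epsilon> :: real assume "\<epsilon> > 0"
    then obtain n where n: "(1/2::real) ^ n < \<epsilon>" using real_arch_pow_inv[of \<epsilon> "1/2"] by auto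
    show "\<exists>M. \<forall>m\<ge>M. \<forall>n\<ge>M. dist (c m) (c n) < \<epsilon>"
    proof (intro exI allI impI)
      fix p q assume "n \<le> p" "n \<le> q"
      have "dist (c p) (c q) \<le> (1/2) ^ min p q"
        using cdist[of p q] cdist[of q p] by (cases "p \<le> q") (auto simp: dist_commute min_def)
      also have "(1/2::real) ^ min p q \<le> (1/2) ^ n" using \<open>n \<le> p\<close> \<open>n \<le> q\<close>
        by (intro power_decreasing) auto
      finally show "dist (c p) (c q) < \<epsilon>" using n by simp
    qed
  qed
  then obtain x where x: "c \<longlonglongrightarrow> x" using Cauchy_convergent_iff convergent_def by blast
  have xin: "x \<in> ballc dn (\<sigma> i)" for i
  proof -
    have "(\<lambda>j. c (j + i)) \<longlonglongrightarrow> x" using x by (rule LIMSEQ_ignore_initial_segment)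
    moreover have "\<forall>j. c (j + i) \<in> ballc dn (\<sigma> i)" using sub cin by (meson le_add2 subsetD)
    moreover have "closed (ballc dn (\<sigma> i))" by (simp add: ballc_def)
    ultimately show ?thesis by (metis closed_sequentially)
  qed
  show ?thesis
  proof (intro exI ballI)
    fix \<alpha> assume \<alpha>: "\<alpha> \<in> I"
    obtain L where L: "\<forall>l\<in>Z - Yset dn (N \<alpha>) (m \<alpha>). length l \<le> L"
      using fin[OF \<alpha>] finite_nat_set_iff_bounded_le[of "length ` (Z - Yset dn (N \<alpha>) (m \<alpha>))"] by auto
    let ?l = "pick (max (to_nat (\<sigma> L)) L)"
    have pl: "?l \<in> Z" "to_nat (\<sigma> L) < length ?l" "L < length ?l"
      using pick[of "max (to_nat (\<sigma> L)) L"] by auto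
    then have "?l \<in> Yset dn (N \<alpha>) (m \<alpha>)" using L by force
    then have "ballc dn (?l ! to_nat (\<sigma> L)) \<inter> N \<alpha> = {}"
      using pl(2) by (simp add: Yset_def)
    then have "ballc dn (\<sigma> (Suc L)) \<inter> N \<alpha> = {}" by (simp add: \<sigma>S)
    then show "x \<notin> N \<alpha>" using xin[of "Suc L"] by blast
  qed
qed



context fbasis
begin

lemma dense_seq: "\<exists>dn :: nat \<Rightarrow> 'a. \<forall>x \<epsilon>. \<epsilon> > 0 \<longrightarrow> (\<exists>i. dist (dn i) x < \<epsilon>)"
proof -
  define f where "f l = (\<Sum>k<length l. of_rat (l ! k) *\<^sub>R e k)" for l :: "rat list"
  have "\<exists>i. dist (f (from_nat i)) x < \<epsilon>" if \<epsilon>: "\<epsilon> > 0" for x \<epsilon>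
  proof -
    obtain A where A: "A \<in> F" "\<forall>\<nu>\<in>A. norm (x - S \<nu> x) < \<epsilon> / 2"
      using S_lim[of x] \<epsilon> unfolding F_limit_def by (meson half_gt_zero)
    obtain \<nu> where \<nu>: "\<nu> \<in> A" using F_ne[OF A(1)] by blast
    define \<delta> where "\<delta> = \<epsilon> / (2 * (real \<nu> + 1))"
    have \<delta>0: "\<delta> > 0" using \<epsilon> by (simp add: \<delta>_def)
    have "\<forall>k. \<exists>q::rat. \<bar>cf x k - of_rat q\<bar> * (norm (e k) + 1) < \<delta>"
    proof
      fix k
      have p: "norm (e k) + 1 > 0" by (simp add: add_nonneg_pos)
      define h where "h = \<delta> / (norm (e k) + 1)"
      have h0: "h > 0" using \<delta>0 p by (simp add: h_def)
      have "cf x k - h < cf x k + h" using h0 by simp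
      from Rats_dense_in_real[OF this]
      obtain r where r: "r \<in> \<rat>" "cf x k - h < r" "r < cf x k + h" by blast
      then obtain q where q: "r = of_rat q" by (auto elim: Rats_cases)
      have "\<bar>cf x k - r\<bar> < \<delta> / (norm (e k) + 1)" using r by (auto simp: h_def)
      then have "\<bar>cf x k - r\<bar> * (norm (e k) + 1) < \<delta>" using p by (simp add: field_simps)
      then show "\<exists>q::rat. \<bar>cf x k - of_rat q\<bar> * (norm (e k) + 1) < \<delta>" using q by blast
    qed
    then obtain q where q: "\<And>k. \<bar>cf x k - of_rat (q k)\<bar> * (norm (e k) + 1) < \<delta>" by metis
    define l where "l = map q [0..<Suc \<nu>]"
    have fl: "f l = (\<Sum>k<Suc \<nu>. of_rat (q k) *\<^sub>R e k)"
      unfolding f_def l_def by (intro sum.cong) (simp_all del: upt_Suc)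
    have Sx: "S \<nu> x = (\<Sum>k<Suc \<nu>. cf x k *\<^sub>R e k)"
      by (simp add: S_def' lessThan_Suc_atMost)
    have "norm (S \<nu> x - f l) = norm (\<Sum>k<Suc \<nu>. (cf x k - of_rat (q k)) *\<^sub>R e k)"
      unfolding Sx fl by (simp add: sum_subtractf scaleR_diff_left)
    also have "\<dots> \<le> (\<Sum>k<Suc \<nu>. norm ((cf x k - of_rat (q k)) *\<^sub>R e k))"
      by (rule norm_sum)
    also have "\<dots> \<le> (\<Sum>k<Suc \<nu>. \<delta>)"
    proof (rule sum_mono)
      fix k
      have "norm ((cf x k - of_rat (q k)) *\<^sub>R e k) = \<bar>cf x k - of_rat (q k)\<bar> * norm (e k)" by simp
      also have "\<dots> \<le> \<bar>cf x k - of_rat (q k)\<bar> * (norm (e k) + 1)" by (simp add: mult_left_mono)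
      also have "\<dots> \<le> \<delta>" using q[of k] by simp
      finally show "norm ((cf x k - of_rat (q k)) *\<^sub>R e k) \<le> \<delta>" .
    qed
    also have "\<dots> = \<epsilon> / 2" using \<epsilon> by (simp add: \<delta>_def field_simps)
    finally have "norm (S \<nu> x - f l) \<le> \<epsilon> / 2" .
    moreover have "norm (x - S \<nu> x) < \<epsilon> / 2" using A \<nu> by blast
    ultimately have "dist (f l) x < \<epsilon>"
      using norm_triangle_ineq[of "x - S \<nu> x" "S \<nu> x - f l"]
      by (simp add: dist_norm norm_minus_commute)
    then show ?thesis by (intro exI[of _ "to_nat l"]) simp
  qed
  then show ?thesis by (intro exI[of _ "\<lambda>i. f (from_nat i)"]) blast
qed

lemma in_some_U:
  assumes "is_filter_base F B"
  shows "\<exists>C\<in>B. \<exists>m::nat. \<forall>\<nu>\<in>C. norm (S \<nu> x) \<le> real m"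
proof -
  obtain A where A: "A \<in> F" "\<forall>\<nu>\<in>A. norm (x - S \<nu> x) < 1"
    using S_lim[of x] unfolding F_limit_def by (meson zero_less_one)
  obtain C where C: "C \<in> B" "C \<subseteq> A" using assms A(1) unfolding is_filter_base_def by blast
  have "\<forall>\<nu>\<in>C. norm (S \<nu> x) \<le> real (nat \<lceil>norm x + 1\<rceil>)"
  proof
    fix \<nu> assume "\<nu> \<in> C"
    then have "norm (x - S \<nu> x) < 1" using A C by blast
    then have "norm (S \<nu> x) \<le> norm x + 1" using norm_triangle_ineq2[of "S \<nu> x" x]
      by (simp add: norm_minus_commute)
    also have "\<dots> \<le> real (nat \<lceil>norm x + 1\<rceil>)" by linarith
    finally show "norm (S \<nu> x) \<le> real (nat \<lceil>norm x + 1\<rceil>)" .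
  qed
  then show ?thesis using C by blast
qed

end


lemma Inter_in_F:
  assumes filt: "is_nat_filter F"
  shows "finite B \<Longrightarrow> B \<noteq> {} \<Longrightarrow> B \<subseteq> F \<Longrightarrow> \<Inter>B \<in> F"
proof (induction B rule: finite_ne_induct)
  case (singleton x) then show ?case by simp
next
  case (insert x B)
  then show ?case using filt unfolding is_nat_filter_def by simp
qed

theorem proposition2p2:
  fixes F :: "nat set set" and e :: "nat \<Rightarrow> 'a::banach"
  assumes "is_nat_filter F"
    and "character_lt_p F"
    and "F_basis F e"
  shows "\<exists>A\<in>F. X_sub F e A = UNIV"
proof (rule ccontr)
  assume H: "\<not> (\<exists>A\<in>F. X_sub F e A = UNIV)"
  interpret fbasis F e using assms(1,3) by unfold_locales
  obtain B where base: "is_filter_base F B"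
    and wit: "\<forall>\<A>. p_witness \<A> \<longrightarrow> (card_of B, card_of \<A>) \<in> ordLess"
    using assms(2) unfolding character_lt_p_def by blast
  have BF: "B \<subseteq> F" using base unfolding is_filter_base_def by blast
  have HB: "X_sub F e C \<noteq> UNIV" if "C \<in> B" for C using H BF that by blast
  obtain C0 where C0: "C0 \<in> B"
  proof -
    obtain A where "A \<in> F" using F_nonempty by blast
    then show ?thesis using base that unfolding is_filter_base_def by blast
  qed
  show False
  proof (cases "finite B")
    case True
    have IF: "\<Inter>B \<in> F" using Inter_in_F[OF assms(1) True _ BF] C0 by blast
    have "X_sub F e (\<Inter>B) = UNIV"
    proof (rule set_eqI, rule iffI)
      fix x :: 'a
      obtain C m where Cm: "C \<in> B" "\<forall>\<nu>\<in>C. norm (S \<nu> x) \<le> real m"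
        using in_some_U[OF base] by blast
      then have "\<forall>\<nu>\<in>\<Inter>B. norm (S \<nu> x) \<le> real m" by blast
      then show "x \<in> X_sub F e (\<Inter>B)"
        unfolding X_sub_def by (intro CollectI bdd_aboveI2[where M="real m"]) blast
    qed simp
    then show False using H IF by blast
  next
    case False
    define U where "U C m = {x. \<forall>\<nu>\<in>C. norm (S \<nu> x) \<le> real m}" for C and m :: nat
    define N where "N \<alpha> = closure (U (fst \<alpha>) (snd \<alpha>))" for \<alpha>
    define I where "I = B \<times> (UNIV :: nat set)"
    have Nprop: "closed (N \<alpha>) \<and> interior (N \<alpha>) = {}" if "\<alpha> \<in> I" for \<alpha>
    proof
      show "closed (N \<alpha>)" by (simp add: N_def)
      show "interior (N \<alpha>) = {}"
      proof (rule ccontr)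
        assume "interior (N \<alpha>) \<noteq> {}"
        then have "X_sub F e (fst \<alpha>) = UNIV"
          using open_map[of "fst \<alpha>" "real (snd \<alpha>)"] BF that
          unfolding N_def U_def I_def by auto
        then show False using HB that unfolding I_def by auto
      qed
    qed
    obtain dn :: "nat \<Rightarrow> 'a" where dense: "\<And>x \<epsilon>. \<epsilon> > 0 \<Longrightarrow> \<exists>i. dist (dn i) x < \<epsilon>"
      using dense_seq by blast
    define Y where "Y \<alpha> = Yset dn (N \<alpha>) (snd \<alpha>)" for \<alpha>
    define \<Y> where "\<Y> = (\<lambda>\<alpha>. to_nat ` Y \<alpha>) ` I"
    have notw: "\<not> p_witness \<Y>"
    proof
      assume "p_witness \<Y>"
      then have lt: "(card_of B, card_of \<Y>) \<in> ordLess" using wit by blast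
      have "(card_of \<Y>, card_of I) \<in> ordLeq" unfolding \<Y>_def by (rule card_of_image)
      moreover have "(card_of I, card_of B) \<in> ordIso"
        unfolding I_def using card_of_Times_infinite[OF False, of "UNIV :: nat set"]
          infinite_iff_card_of_nat[of B] False by auto
      ultimately have "(card_of \<Y>, card_of B) \<in> ordLeq" using ordLeq_ordIso_trans by blast
      then show False using lt not_ordLess_ordLeq by blast
    qed
    have sfip: "\<forall>\<C>. finite \<C> \<and> \<C> \<noteq> {} \<and> \<C> \<subseteq> \<Y> \<longrightarrow> infinite (\<Inter>\<C>)"
    proof (intro allI impI, elim conjE)
      fix \<C> assume fin: "finite \<C>" and ne: "\<C> \<noteq> {}" and sub: "\<C> \<subseteq> \<Y>"
      obtain J where J: "J \<subseteq> I" "finite J" "\<C> = (\<lambda>\<alpha>. to_nat ` Y \<alpha>) ` J"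
        using finite_subset_image[OF fin sub[unfolded \<Y>_def]] by blast
      then obtain j where j: "j \<in> J" using ne by blast
      have eq: "\<Inter>\<C> = to_nat ` (\<Inter>\<alpha>\<in>J. Y \<alpha>)"
        using image_INT[of to_nat UNIV J Y j] j J(3) by (simp add: inj_to_nat)
      have "infinite (\<Inter>\<alpha>\<in>J. Yset dn (N \<alpha>) (snd \<alpha>))"
        using Yset_infinite[OF dense J(2), of N snd] Nprop J(1) by blast
      then have "infinite (\<Inter>\<alpha>\<in>J. Y \<alpha>)" by (simp add: Y_def)
      then show "infinite (\<Inter>\<C>)" unfolding eq
        using finite_imageD inj_to_nat by (metis injD inj_onI)
    qed
    obtain Bz where Bz: "infinite Bz" "\<forall>A\<in>\<Y>. finite (Bz - A)"
      using notw sfip unfolding p_witness_def by blast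
    define Z :: "(nat \<times> nat) list set" where "Z = to_nat -` Bz"
    have finZ: "finite (Z - Yset dn (N \<alpha>) (snd \<alpha>))" if "\<alpha> \<in> I" for \<alpha>
    proof -
      have "finite (Bz - to_nat ` Y \<alpha>)" using Bz(2) that unfolding \<Y>_def by blast
      then have "finite ((to_nat :: (nat \<times> nat) list \<Rightarrow> nat) -` (Bz - to_nat ` Y \<alpha>))" by (rule finite_vimageI) (simp add: inj_to_nat)
      moreover have "Z - Y \<alpha> \<subseteq> to_nat -` (Bz - to_nat ` Y \<alpha>)"
        unfolding Z_def using inj_to_nat by (auto dest: injD)
      ultimately have "finite (Z - Y \<alpha>)" by (rule finite_subset[rotated])
      then show ?thesis by (simp add: Y_def)
    qed
    have I0: "(C0, 0) \<in> I" using C0 by (simp add: I_def)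
    have Zinf: "infinite Z"
    proof
      assume fZ: "finite Z"
      have f1: "finite (Bz - to_nat ` Y (C0, 0))" using Bz(2) I0 unfolding \<Y>_def by blast
      have "Bz \<inter> to_nat ` Y (C0, 0) \<subseteq> to_nat ` Z" unfolding Z_def by auto
      then have "finite (Bz \<inter> to_nat ` Y (C0, 0))" using fZ by (meson finite_imageI finite_subset)
      then have "finite Bz" using f1 by (metis Diff_Int Int_Diff_Un finite_UnI Int_Diff Un_Diff_Int)
      then show False using Bz(1) by blast
    qed
    have big: "\<exists>\<alpha>\<in>I. n < snd \<alpha>" for n
      using C0 by (intro bexI[of _ "(C0, Suc n)"]) (auto simp: I_def)
    obtain x where x: "\<forall>\<alpha>\<in>I. x \<notin> N \<alpha>"
      using avoid_all[OF Zinf finZ big] by blast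
    obtain C m where Cm: "C \<in> B" "\<forall>\<nu>\<in>C. norm (S \<nu> x) \<le> real m"
      using in_some_U[OF base] by blast
    then have "x \<in> N (C, m)" unfolding N_def U_def using closure_subset by fastforce
    moreover have "(C, m) \<in> I" using Cm by (simp add: I_def)
    ultimately show False using x by blast
  qed
qed


end
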